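(* Let $a>-1$, $C>0$ and $c>0$ be constants. Let $g:[0,1]\to\mathbb{R}$ be a function of the form $g(x)=\sum_{n=1}^\infty g_nx^n$ with $|g_n|\le Cn^a$ for all $n\ge1$. Let $P\ge1$ and let $\hat x_1,\dots,\hat x_P$ be the Chebyshev nodes of the first kind shifted and scaled to the interval $[0,1/(1+c)]$, i.e. $\hat x_i=\frac{1+\cos\left(\frac{(2i-1)\pi}{2P}\right)}{2(1+c)}$. Let $\epsilon>0$. If $|g(\hat x_i)|<\epsilon$ for all $i=1,\dots,P$, then for all $x\in[0,1/(1+c)]$, $$|g(x)|\le D\,(\log(P+1)+1)\left(\epsilon+\frac{\zeta^{-P}}{\zeta-1}\right),$$ where $\zeta=c+1+\sqrt{c^2+2c}$ and $D$ is a constant depending only on $a$, $c$ and $C$. *)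

theory Defs
  imports Complex_Main
begin

definition g_series :: "(nat \<Rightarrow> real) \<Rightarrow> real \<Rightarrow> real" where
  "g_series gc x = (\<Sum>n. gc (Suc n) * x ^ Suc n)"

definition cheb_node :: "real \<Rightarrow> nat \<Rightarrow> nat \<Rightarrow> real" where
  "cheb_node c P i = (1 + cos ((2 * real i - 1) * pi / (2 * real P))) / (2 * (1 + c))"

definition zeta :: "real \<Rightarrow> real" where
  "zeta c = c + 1 + sqrt (c\<^sup>2 + 2 * c)"

end

theory Submission
  imports Defs
begin


definition Hm :: "nat \<Rightarrow> real" where "Hm N = (\<Sum>j=1..N. 1 / real j)"

lemma Hm_Suc: "Hm (Suc n) = Hm n + 1 / real (Suc n)"
  unfolding Hm_def by simp

lemma Hm_mono: "m \<le> n \<Longrightarrow> Hm m \<le> Hm n"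
proof (induction n)
  case 0 then show ?case by simp
next
  case (Suc n)
  then show ?case
    by (cases "m = Suc n") (auto simp: Hm_Suc le_Suc_eq intro: order.trans)
qed

lemma Hm_le_ln: "n \<ge> 1 \<Longrightarrow> Hm n \<le> ln (real n) + 1"
proof (induction n rule: nat_induct_at_least)
  case base then show ?case by (simp add: Hm_def)
next
  case (Suc n)
  have n0: "real n > 0" using Suc by simp
  have "ln (real n / real (Suc n)) \<le> real n / real (Suc n) - 1"
    by (rule ln_le_minus_one) (use n0 in simp)
  also have "\<dots> = - 1 / real (Suc n)" by (simp add: field_simps)
  finally have "ln (real n) - ln (real (Suc n)) \<le> - 1 / real (Suc n)"
    using n0 by (simp add: ln_div)
  then show ?case using Suc by (simp add: Hm_Suc)
qed

lemma Hm_set: "finite S \<Longrightarrow> 0 \<notin> S \<Longrightarrow> (\<Sum>j\<in>S. 1 / real j) \<le> Hm (card S)"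
proof (induction "card S" arbitrary: S)
  case 0 then show ?case by (simp add: Hm_def)
next
  case (Suc n S)
  have ne: "S \<noteq> {}" using Suc(2) by auto
  define M where "M = Max S"
  have MS: "M \<in> S" using Max_in[OF Suc(3) ne] M_def by simp
  have sub: "S \<subseteq> {1..M}" using Suc(3,4) M_def
    by (metis Max_ge atLeastAtMost_iff subsetI less_one linorder_not_le)
  have "card S \<le> M" using card_mono[OF _ sub] by simp
  hence cM: "real (Suc n) \<le> real M" using Suc(2) by simp
  have c': "n = card (S - {M})" using Suc(2) MS by simp
  have IH: "(\<Sum>j\<in>S - {M}. 1 / real j) \<le> Hm n"
    using Suc(1)[OF c'] Suc(3,4) c' by simp
  have "(\<Sum>j\<in>S. 1 / real j) = (\<Sum>j\<in>S - {M}. 1 / real j) + 1 / real M"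
    using sum.remove[OF Suc(3) MS, of "\<lambda>j. 1 / real j"] by simp
  also have "\<dots> \<le> Hm n + 1 / real (Suc n)"
    using IH cM by (intro add_mono) (auto intro!: divide_left_mono)
  finally have fin: "(\<Sum>j\<in>S. 1 / real j) \<le> Hm n + 1 / real (Suc n)" .
  have "Hm (card S) = Hm n + 1 / real (Suc n)" using Suc(2) Hm_Suc by metis
  then show ?case using fin by linarith
qed

lemma Hm_inj:
  assumes "finite I" "card I \<le> N" "inj_on f I" "\<And>i. i \<in> I \<Longrightarrow> f i \<ge> 1"
  shows "(\<Sum>i\<in>I. 1 / real (f i)) \<le> Hm N"
proof -
  have "(\<Sum>i\<in>I. 1 / real (f i)) = (\<Sum>j\<in>f ` I. 1 / real j)"
    using sum.reindex[OF assms(3), of "\<lambda>j. 1 / real j"] by simp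
  also have "\<dots> \<le> Hm (card (f ` I))"
    by (rule Hm_set) (use assms in force)+
  also have "\<dots> \<le> Hm N"
    using assms card_image[OF assms(3)] by (intro Hm_mono) simp
  finally show ?thesis .
qed

lemma two_sided:
  fixes s :: real
  shows "(\<Sum>i=1..N. 1 / (\<bar>s - real i\<bar> + 1)) \<le> 2 * Hm N"
proof -
  let ?f = "\<lambda>i::nat. 1 / (\<bar>s - real i\<bar> + 1)"
  define I1 where "I1 = {1..N} \<inter> {i. s \<le> real i}"
  define I2 where "I2 = {1..N} - {i. s \<le> real i}"
  have split: "(\<Sum>i=1..N. ?f i) = sum ?f I1 + sum ?f I2"
    unfolding I1_def I2_def using sum.Int_Diff[of "{1..N}" ?f "{i. s \<le> real i}"] by simp
  define f1 where "f1 i = nat (int i - \<lceil>s\<rceil> + 1)" for i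
  define f2 where "f2 i = nat (\<lceil>s\<rceil> - int i)" for i
  have b1: "sum ?f I1 \<le> (\<Sum>i\<in>I1. 1 / real (f1 i))"
  proof (rule sum_mono)
    fix i assume "i \<in> I1"
    hence si: "s \<le> real i" by (simp add: I1_def)
    hence ci: "\<lceil>s\<rceil> \<le> int i" by (simp add: ceiling_le_iff)
    have "real (f1 i) = real i - of_int \<lceil>s\<rceil> + 1" using ci unfolding f1_def by simp
    moreover have "of_int \<lceil>s\<rceil> \<ge> s" by simp
    ultimately have "real (f1 i) \<le> \<bar>s - real i\<bar> + 1" "real (f1 i) \<ge> 1" using si ci by auto
    then show "?f i \<le> 1 / real (f1 i)" by (intro divide_left_mono) auto
  qed
  have b2: "sum ?f I2 \<le> (\<Sum>i\<in>I2. 1 / real (f2 i))"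
  proof (rule sum_mono)
    fix i assume "i \<in> I2"
    hence si: "real i < s" by (simp add: I2_def)
    hence ci: "int i < \<lceil>s\<rceil>" by (simp add: less_ceiling_iff)
    have "real (f2 i) = of_int \<lceil>s\<rceil> - real i" using ci unfolding f2_def by simp
    moreover have "of_int \<lceil>s\<rceil> < s + 1" by linarith
    ultimately have "real (f2 i) \<le> \<bar>s - real i\<bar> + 1" "real (f2 i) \<ge> 1" using si ci by auto
    then show "?f i \<le> 1 / real (f2 i)" by (intro divide_left_mono) auto
  qed
  have h1: "(\<Sum>i\<in>I1. 1 / real (f1 i)) \<le> Hm N"
  proof (rule Hm_inj)
    show "finite I1" "card I1 \<le> N" unfolding I1_def
      by simp (metis card_atLeastAtMost card_mono diff_Suc_1 finite_atLeastAtMost inf_le1)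
    show "inj_on f1 I1"
    proof (rule inj_onI)
      fix x y assume xy: "x \<in> I1" "y \<in> I1" "f1 x = f1 y"
      then have "\<lceil>s\<rceil> \<le> int x" "\<lceil>s\<rceil> \<le> int y" by (auto simp: I1_def ceiling_le_iff)
      then have "int x - \<lceil>s\<rceil> + 1 = int y - \<lceil>s\<rceil> + 1"
        using xy(3) eq_nat_nat_iff unfolding f1_def by (metis add_increasing2 diff_ge_0_iff_ge zero_less_one_class.zero_le_one)
      then show "x = y" by simp
    qed
    show "1 \<le> f1 i" if "i \<in> I1" for i
    proof -
      have "\<lceil>s\<rceil> \<le> int i" using that by (auto simp: I1_def intro!: ceiling_le)
      then show ?thesis unfolding f1_def by simp
    qed
  qed
  have h2: "(\<Sum>i\<in>I2. 1 / real (f2 i)) \<le> Hm N"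
  proof (rule Hm_inj)
    show "finite I2" "card I2 \<le> N" unfolding I2_def
      by simp (metis Diff_subset card_atLeastAtMost card_mono diff_Suc_1 finite_atLeastAtMost)
    show "inj_on f2 I2"
    proof (rule inj_onI)
      fix x y assume xy: "x \<in> I2" "y \<in> I2" "f2 x = f2 y"
      then have "int x < \<lceil>s\<rceil>" "int y < \<lceil>s\<rceil>" by (auto simp: I2_def less_ceiling_iff)
      then have "\<lceil>s\<rceil> - int x = \<lceil>s\<rceil> - int y"
        using xy(3) eq_nat_nat_iff unfolding f2_def by (metis diff_ge_0_iff_ge less_imp_le)
      then show "x = y" by simp
    qed
    show "1 \<le> f2 i" if "i \<in> I2" for i
    proof -
      have "real i < s" using that by (auto simp: I2_def)
      then have "real i < of_int \<lceil>s\<rceil>" using le_of_int_ceiling[of s] by linarith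
      then have "int i < \<lceil>s\<rceil>" by (metis of_int_less_iff of_int_of_nat_eq)
      then show ?thesis unfolding f2_def by simp
    qed
  qed
  show ?thesis using split b1 b2 h1 h2 by linarith
qed



definition Dk :: "nat \<Rightarrow> real \<Rightarrow> real" where
  "Dk N u = 1 + 2 * (\<Sum>j=1..<N. cos (real j * u))"

lemma Dk_abs_le: "N \<ge> 1 \<Longrightarrow> \<bar>Dk N u\<bar> \<le> 2 * real N"
proof -
  assume N: "N \<ge> 1"
  have "\<bar>\<Sum>j=1..<N. cos (real j * u)\<bar> \<le> (\<Sum>j=1..<N. \<bar>cos (real j * u)\<bar>)"
    by (rule sum_abs)
  also have "\<dots> \<le> (\<Sum>j=1..<N. 1)" by (intro sum_mono) simp
  also have "\<dots> = real N - 1" using N by simp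
  finally show ?thesis unfolding Dk_def by linarith
qed

lemma Dk_sin: "Dk (Suc n) u * sin (u / 2) = sin ((real n + 1 / 2) * u)"
proof (induction n)
  case 0 then show ?case by (simp add: Dk_def)
next
  case (Suc n)
  have "Dk (Suc (Suc n)) u = Dk (Suc n) u + 2 * cos (real (Suc n) * u)"
    by (simp add: Dk_def)
  moreover have "2 * cos (real (Suc n) * u) * sin (u / 2) =
      sin ((real (Suc n) + 1 / 2) * u) - sin ((real n + 1 / 2) * u)"
  proof -
    have a: "(real (Suc n) + 1 / 2) * u = real (Suc n) * u + u / 2"
      by (simp add: algebra_simps)
    have b: "(real n + 1 / 2) * u = real (Suc n) * u - u / 2"
      by (simp add: algebra_simps)
    show ?thesis unfolding a b sin_add sin_diff by simp
  qed
  ultimately show ?case using Suc by (simp add: algebra_simps)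
qed

lemma sin_lower: assumes "0 \<le> y" "y \<le> pi / 2" shows "y / 4 \<le> sin y"
proof (cases "y \<le> pi / 3")
  case True
  show ?thesis
  proof (cases "y = 0")
    case True then show ?thesis by simp
  next
    case False
    hence y0: "0 < y" using assms by simp
    obtain z where z: "0 < z" "z < y" "sin y - sin 0 = (y - 0) * cos z"
      using MVT2[OF y0, of sin cos] by (auto intro: DERIV_sin)
    have "cos (pi / 3) \<le> cos z"
      using z True by (intro cos_monotone_0_pi_le) (auto simp: pi_gt_zero less_imp_le)
    hence "1 / 2 \<le> cos z" by (simp add: cos_60)
    hence "y / 2 \<le> y * cos z" using y0 by (simp add: mult_left_mono[of "1/2" "cos z" y, simplified])
    then show ?thesis using z y0 by simp
  qed
next
  case False
  have "sin (pi / 3) \<le> sin y"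
    using False assms by (intro sin_monotone_2pi_le) auto
  hence "sqrt 3 / 2 \<le> sin y" by (simp add: sin_60)
  moreover have "1 \<le> sqrt 3" by simp
  moreover have "y / 4 \<le> 1 / 2" using assms pi_less_4 by simp
  ultimately show ?thesis by linarith
qed

lemma abs_sin_half_lower: assumes "\<bar>u\<bar> \<le> pi" shows "\<bar>u\<bar> / 8 \<le> \<bar>sin (u / 2)\<bar>"
proof (cases "u \<ge> 0")
  case True
  have "(u/2) / 4 \<le> sin (u / 2)" using assms True by (intro sin_lower) auto
  then show ?thesis using True by simp
next
  case False
  have "(-u/2) / 4 \<le> sin (-u / 2)" using assms False by (intro sin_lower) auto
  then show ?thesis using False by simp
qed

lemma Dk_bound:
  assumes N: "N \<ge> 1" and u: "\<bar>u\<bar> \<le> pi"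
  shows "\<bar>Dk N u\<bar> \<le> 8 * real N / (real N * \<bar>u\<bar> / pi + 1)"
proof -
  define d where "d = real N * \<bar>u\<bar> / pi"
  have d0: "d \<ge> 0" unfolding d_def by simp
  show ?thesis
  proof (cases "d \<le> 1")
    case True
    have "2 * real N \<le> 8 * real N / (d + 1)"
      using True d0 N by (simp add: field_simps)
    then show ?thesis using Dk_abs_le[OF N, of u] unfolding d_def by linarith
  next
    case False
    have up: "\<bar>u\<bar> > 0" using False unfolding d_def by (cases "u = 0") auto
    obtain n where n: "N = Suc n" using N by (cases N) auto
    have "\<bar>Dk N u\<bar> * \<bar>sin (u / 2)\<bar> \<le> 1"
      using Dk_sin[of n u] n by (simp add: abs_mult[symmetric])
    moreover have s8: "\<bar>u\<bar> / 8 \<le> \<bar>sin (u / 2)\<bar>" by (rule abs_sin_half_lower[OF u])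
    ultimately have "\<bar>Dk N u\<bar> * (\<bar>u\<bar> / 8) \<le> 1"
      by (meson abs_ge_zero mult_left_mono order.trans)
    hence A: "\<bar>Dk N u\<bar> \<le> 8 / \<bar>u\<bar>" using up by (simp add: field_simps)
    have "\<bar>u\<bar> = d * pi / real N" unfolding d_def using N by simp
    hence "8 / \<bar>u\<bar> = 8 * real N / (d * pi)" by simp
    also have "\<dots> \<le> 8 * real N / (d * 2)"
      using False pi_ge_two N by (intro divide_left_mono mult_left_mono) auto
    also have "\<dots> \<le> 8 * real N / (d + 1)"
      using False N by (simp add: field_simps)
    finally show ?thesis using A unfolding d_def by linarith
  qed
qed

lemma Dk_periodic: "Dk N (v - 2 * pi) = Dk N v"
proof -
  have "cos (real j * (v - 2 * pi)) = cos (real j * v)" for j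
  proof -
    have "real j * (v - 2 * pi) = real j * v - real j * (2 * pi)" by (simp add: algebra_simps)
    moreover have "cos (real j * (2 * pi)) = 1" "sin (real j * (2 * pi)) = 0"
      using cos_int_2pin[of "int j"] sin_int_2pin[of "int j"] by (simp_all add: mult.commute)
    ultimately show ?thesis by (simp add: cos_diff)
  qed
  then show ?thesis unfolding Dk_def by simp
qed



definition nd :: "nat \<Rightarrow> nat \<Rightarrow> real" where
  "nd N i = (2 * real i - 1) * pi / (2 * real N)"

definition Kr :: "nat \<Rightarrow> real \<Rightarrow> real \<Rightarrow> real" where
  "Kr N t p = 1 + 2 * (\<Sum>j=1..<N. cos (real j * p) * cos (real j * t))"

lemma Kr_split: "Kr N t p = (Dk N (t - p) + Dk N (t + p)) / 2"
proof -
  have "cos (real j * (t - p)) + cos (real j * (t + p)) = 2 * (cos (real j * p) * cos (real j * t))" for j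
  proof -
    have "real j * (t - p) = real j * t - real j * p" "real j * (t + p) = real j * t + real j * p"
      by (simp_all add: algebra_simps)
    then show ?thesis by (simp add: cos_diff cos_add)
  qed
  hence "(\<Sum>j=1..<N. cos (real j * (t - p))) + (\<Sum>j=1..<N. cos (real j * (t + p))) =
        2 * (\<Sum>j=1..<N. cos (real j * p) * cos (real j * t))"
    by (simp add: sum.distrib[symmetric] sum_distrib_left)
  then show ?thesis unfolding Kr_def Dk_def by simp
qed

lemma nd_bounds: assumes "1 \<le> i" "i \<le> N" shows "0 \<le> nd N i" "nd N i \<le> pi"
  and "real N * nd N i / pi = real i - 1 / 2"
proof -
  have N: "real N > 0" using assms by simp
  show "0 \<le> nd N i" unfolding nd_def using assms by simp
  have "(2 * real i - 1) * pi \<le> (2 * real N) * pi" using assms by (intro mult_right_mono) auto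
  then show "nd N i \<le> pi" unfolding nd_def using N by (simp add: divide_le_eq)
  show "real N * nd N i / pi = real i - 1 / 2" unfolding nd_def using N by (simp add: field_simps)
qed

lemma Leb_term:
  assumes N: "N \<ge> 1" and i: "1 \<le> i" "i \<le> N" and t: "0 \<le> t" "t \<le> pi"
  shows "\<bar>Kr N t (nd N i)\<bar> \<le> 4 * real N * (1 / (\<bar>(real N * t / pi + 1 / 2) - real i\<bar> + 1)
           + 1 / real i + 1 / (real N + 1 - real i))"
proof -
  let ?p = "nd N i"
  note nb = nd_bounds[OF i]
  have Np: "real N > 0" using N by simp
  have A: "\<bar>Dk N (t - ?p)\<bar> \<le> 8 * real N / (\<bar>(real N * t / pi + 1 / 2) - real i\<bar> + 1)"
  proof -
    have "\<bar>t - ?p\<bar> \<le> pi" using nb t by auto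
    note Dk_bound[OF N this]
    moreover have "real N * \<bar>t - ?p\<bar> / pi = \<bar>(real N * t / pi + 1 / 2) - real i\<bar>"
    proof -
      have e1: "real N * \<bar>t - ?p\<bar> / pi = \<bar>real N * (t - ?p) / pi\<bar>" using Np by (simp add: abs_mult)
      have e2: "real N * (t - ?p) / pi = real N * t / pi - real N * ?p / pi"
        by (simp add: diff_divide_distrib right_diff_distrib)
      have e3: "real N * (t - ?p) / pi = (real N * t / pi + 1 / 2) - real i"
        by (subst e2, subst nb(3)) simp
      show ?thesis using e1 e3 by simp
    qed
    ultimately show ?thesis by simp
  qed
  have B: "\<bar>Dk N (t + ?p)\<bar> \<le> 8 * real N / real i + 8 * real N / (real N + 1 - real i)"
  proof (cases "t + ?p \<le> pi")
    case True
    have "\<bar>t + ?p\<bar> \<le> pi" using True nb t by auto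
    note Dk_bound[OF N this]
    moreover have "real i \<le> real N * \<bar>t + ?p\<bar> / pi + 1"
    proof -
      have "real N * \<bar>t + ?p\<bar> / pi = real N * t / pi + real N * ?p / pi"
        using nb t by (simp add: field_simps)
      moreover have "real N * t / pi \<ge> 0" using t by simp
      ultimately show ?thesis using nb(3) by linarith
    qed
    ultimately have "\<bar>Dk N (t + ?p)\<bar> \<le> 8 * real N / real i"
    proof -
      assume d1: "\<bar>Dk N (t + ?p)\<bar> \<le> 8 * real N / (real N * \<bar>t + ?p\<bar> / pi + 1)"
        and d2: "real i \<le> real N * \<bar>t + ?p\<bar> / pi + 1"
      have "8 * real N / (real N * \<bar>t + ?p\<bar> / pi + 1) \<le> 8 * real N / real i"
      proof (rule divide_left_mono[OF d2])
        have h0: "0 \<le> real N * \<bar>t + ?p\<bar> / pi" by simp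
        have h1: "0 < real N * \<bar>t + ?p\<bar> / pi + 1" using h0 by linarith
        have h2: "0 < real i" using i by simp
        show "0 < (real N * \<bar>t + ?p\<bar> / pi + 1) * real i" using h1 h2 by (rule mult_pos_pos)
      qed (use Np in auto)
      then show ?thesis using d1 by linarith
    qed
    moreover have "8 * real N / (real N + 1 - real i) \<ge> 0" using i by simp
    ultimately show ?thesis by linarith
  next
    case False
    have "\<bar>t + ?p - 2 * pi\<bar> \<le> pi" using False nb t by auto
    note Dk_bound[OF N this]
    moreover have "real N + 1 - real i \<le> real N * \<bar>t + ?p - 2 * pi\<bar> / pi + 1"
    proof -
      have "real N * \<bar>t + ?p - 2 * pi\<bar> / pi = 2 * real N - real N * t / pi - real N * ?p / pi"
        using nb t False by (simp add: field_simps)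
      moreover have "real N * t / pi \<le> real N" using t Np by (simp add: field_simps)
      ultimately show ?thesis using nb(3) by linarith
    qed
    moreover have "real N + 1 - real i > 0" using i by simp
    ultimately have "\<bar>Dk N (t + ?p)\<bar> \<le> 8 * real N / (real N + 1 - real i)"
    proof -
      assume d1: "\<bar>Dk N (t + ?p - 2 * pi)\<bar> \<le> 8 * real N / (real N * \<bar>t + ?p - 2 * pi\<bar> / pi + 1)"
        and d2: "real N + 1 - real i \<le> real N * \<bar>t + ?p - 2 * pi\<bar> / pi + 1"
        and d3: "real N + 1 - real i > 0"
      have "8 * real N / (real N * \<bar>t + ?p - 2 * pi\<bar> / pi + 1) \<le> 8 * real N / (real N + 1 - real i)"
      proof (rule divide_left_mono[OF d2])
        have h0: "0 \<le> real N * \<bar>t + ?p - 2 * pi\<bar> / pi" by simp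
        have h1: "0 < real N * \<bar>t + ?p - 2 * pi\<bar> / pi + 1" using h0 by linarith
        show "0 < (real N * \<bar>t + ?p - 2 * pi\<bar> / pi + 1) * (real N + 1 - real i)"
          using h1 d3 by (rule mult_pos_pos)
      qed (use Np in auto)
      then show ?thesis using d1 Dk_periodic[of N "t + ?p"] by linarith
    qed
    moreover have "8 * real N / real i \<ge> 0" by simp
    ultimately show ?thesis by linarith
  qed
  have "\<bar>Kr N t ?p\<bar> \<le> (\<bar>Dk N (t - ?p)\<bar> + \<bar>Dk N (t + ?p)\<bar>) / 2"
    unfolding Kr_split using abs_triangle_ineq[of "Dk N (t - ?p)" "Dk N (t + ?p)"] by simp
  also have "\<dots> \<le> (8 * real N / (\<bar>(real N * t / pi + 1 / 2) - real i\<bar> + 1)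
       + (8 * real N / real i + 8 * real N / (real N + 1 - real i))) / 2"
    by (rule divide_right_mono[OF add_mono[OF A B]]) simp
  also have "\<dots> = 4 * real N * (1 / (\<bar>(real N * t / pi + 1 / 2) - real i\<bar> + 1)
           + 1 / real i + 1 / (real N + 1 - real i))"
    by (simp add: field_simps)
  finally show ?thesis .
qed

lemma Hm_rev: "(\<Sum>i=1..N. 1 / (real N + 1 - real i)) \<le> Hm N"
proof -
  have "(\<Sum>i=1..N. 1 / (real N + 1 - real i)) = (\<Sum>i=1..N. 1 / real (N + 1 - i))"
    by (intro sum.cong) (auto simp: of_nat_diff)
  also have "\<dots> \<le> Hm N"
    by (rule Hm_inj) (auto simp: inj_on_def)
  finally show ?thesis .
qed

lemma Leb:
  assumes N: "N \<ge> 1" and t: "0 \<le> t" "t \<le> pi"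
  shows "(\<Sum>i=1..N. \<bar>Kr N t (nd N i)\<bar>) \<le> 16 * real N * Hm N"
proof -
  let ?s = "real N * t / pi + 1 / 2"
  have "(\<Sum>i=1..N. \<bar>Kr N t (nd N i)\<bar>) \<le> (\<Sum>i=1..N. 4 * real N * (1 / (\<bar>?s - real i\<bar> + 1)
           + 1 / real i + 1 / (real N + 1 - real i)))"
    by (intro sum_mono Leb_term[OF N _ _ t]) auto
  also have "\<dots> = 4 * real N * ((\<Sum>i=1..N. 1 / (\<bar>?s - real i\<bar> + 1)) + Hm N
          + (\<Sum>i=1..N. 1 / (real N + 1 - real i)))"
    by (simp only: sum_distrib_left[symmetric] sum.distrib Hm_def)
  also have "\<dots> \<le> 4 * real N * (2 * Hm N + Hm N + Hm N)"
    using two_sided[of ?s N] Hm_rev[of N] by (intro mult_left_mono) auto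
  finally show ?thesis by simp
qed

lemma tele: "2 * sin a * (\<Sum>i=1..n. cos ((2 * real i - 1) * a)) = sin (2 * real n * a)"
proof (induction n)
  case 0 then show ?case by simp
next
  case (Suc n)
  have e: "2 * sin a * cos ((2 * real (Suc n) - 1) * a) = sin (2 * real (Suc n) * a) - sin (2 * real n * a)"
  proof -
    have "2 * real (Suc n) * a = (2 * real (Suc n) - 1) * a + a"
         "2 * real n * a = (2 * real (Suc n) - 1) * a - a" by (simp_all add: algebra_simps)
    then show ?thesis by (simp add: sin_add sin_diff)
  qed
  show ?case using Suc e by (simp add: algebra_simps)
qed

lemma S_val:
  assumes N: "N \<ge> 1" and k: "k < 2 * N"
  shows "(\<Sum>i=1..N. cos (real k * nd N i)) = (if k = 0 then real N else 0)"
proof (cases "k = 0")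
  case True then show ?thesis by simp
next
  case False
  define a where "a = real k * pi / (2 * real N)"
  have eq: "real k * nd N i = (2 * real i - 1) * a" for i
    unfolding a_def nd_def by (simp add: field_simps)
  have a0: "0 < a" using False N unfolding a_def by simp
  have "a < pi" using k N unfolding a_def by (simp add: field_simps)
  hence "sin a > 0" using a0 by (simp add: sin_gt_zero)
  moreover have "sin (2 * real N * a) = 0"
  proof -
    have "2 * real N * a = real k * pi" unfolding a_def using N by simp
    then show ?thesis by (simp add: sin_npi)
  qed
  ultimately have "(\<Sum>i=1..N. cos ((2 * real i - 1) * a)) = 0"
    using tele[of a N] by simp
  then show ?thesis using False by (simp add: eq)
qed

lemma O_val:
  assumes N: "N \<ge> 1" and k: "k < N" and j: "j < N"
  shows "(\<Sum>i=1..N. cos (real k * nd N i) * cos (real j * nd N i)) =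
         (if j = k then (if k = 0 then real N else real N / 2) else 0)"
proof -
  define dd where "dd = (if j \<le> k then k - j else j - k)"
  have pr: "cos (real k * nd N i) * cos (real j * nd N i) =
      (cos (real dd * nd N i) + cos (real (k + j) * nd N i)) / 2" for i
  proof -
    have c1: "cos (real k * nd N i - real j * nd N i) = cos (real dd * nd N i)"
    proof (cases "j \<le> k")
      case True then show ?thesis unfolding dd_def by (simp add: of_nat_diff left_diff_distrib)
    next
      case False
      have "cos (real k * nd N i - real j * nd N i) = cos (real j * nd N i - real k * nd N i)"
        by (metis cos_minus minus_diff_eq)
      then show ?thesis using False unfolding dd_def by (simp add: of_nat_diff left_diff_distrib)
    qed
    have c2: "real (k + j) * nd N i = real k * nd N i + real j * nd N i" by (simp add: algebra_simps)
    have c3: "cos (real k * nd N i) * cos (real j * nd N i) =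
       (cos (real k * nd N i - real j * nd N i) + cos (real k * nd N i + real j * nd N i)) / 2"
      by (simp add: cos_add cos_diff)
    show ?thesis using c1 c2 c3 by simp
  qed
  have "(\<Sum>i=1..N. cos (real k * nd N i) * cos (real j * nd N i)) =
     ((\<Sum>i=1..N. cos (real dd * nd N i)) + (\<Sum>i=1..N. cos (real (k + j) * nd N i))) / 2"
    unfolding pr by (simp only: sum.distrib[symmetric] sum_divide_distrib)
  also have "\<dots> = ((if dd = 0 then real N else 0) + (if k + j = 0 then real N else 0)) / 2"
  proof -
    have "dd < 2 * N" "k + j < 2 * N" using k j unfolding dd_def by auto
    note s1 = S_val[OF N this(1)] and s2 = S_val[OF N this(2)]
    show ?thesis unfolding s1 s2 ..
  qed
  finally have fin: "(\<Sum>i=1..N. cos (real k * nd N i) * cos (real j * nd N i)) =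
      ((if dd = 0 then real N else 0) + (if k + j = 0 then real N else 0)) / 2" .
  have "dd = 0 \<longleftrightarrow> j = k" unfolding dd_def by auto
  then show ?thesis using fin by auto
qed

lemma reprod_cos:
  assumes N: "N \<ge> 1" and k: "k < N"
  shows "(1 / real N) * (\<Sum>i=1..N. cos (real k * nd N i) * Kr N t (nd N i)) = cos (real k * t)"
proof -
  have "(\<Sum>i=1..N. cos (real k * nd N i) * Kr N t (nd N i)) =
     (\<Sum>i=1..N. cos (real k * nd N i)) +
     2 * (\<Sum>j=1..<N. cos (real j * t) * (\<Sum>i=1..N. cos (real k * nd N i) * cos (real j * nd N i)))"
  proof -
    have pt: "cos (real k * nd N i) * Kr N t (nd N i) = cos (real k * nd N i) +
       2 * (\<Sum>j=1..<N. cos (real j * t) * (cos (real k * nd N i) * cos (real j * nd N i)))" for i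
      unfolding Kr_def by (simp add: algebra_simps sum_distrib_left)
    have sw: "(\<Sum>i=1..N. \<Sum>j=1..<N. cos (real j * t) * (cos (real k * nd N i) * cos (real j * nd N i)))
       = (\<Sum>j=1..<N. \<Sum>i=1..N. cos (real j * t) * (cos (real k * nd N i) * cos (real j * nd N i)))"
      by (rule sum.swap)
    show ?thesis unfolding pt sum.distrib sum_distrib_left[symmetric] sw by simp
  qed
  also have "(\<Sum>j=1..<N. cos (real j * t) * (\<Sum>i=1..N. cos (real k * nd N i) * cos (real j * nd N i)))
      = (\<Sum>j=1..<N. if j = k then cos (real k * t) * (real N / 2) else 0)"
  proof (intro sum.cong refl)
    fix j assume j: "j \<in> {1..<N}"
    have "j < N" using j by simp
    note O = O_val[OF N k this]
    show "cos (real j * t) * (\<Sum>i=1..N. cos (real k * nd N i) * cos (real j * nd N i)) =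
      (if j = k then cos (real k * t) * (real N / 2) else 0)"
      using j unfolding O by auto
  qed
  also have "\<dots> = (if k \<in> {1..<N} then cos (real k * t) * (real N / 2) else 0)"
    by (rule sum.delta) simp
  finally show ?thesis using N k S_val[OF N, of k] by auto
qed



definition Rep :: "nat \<Rightarrow> (real \<Rightarrow> real) \<Rightarrow> bool" where
  "Rep N F \<longleftrightarrow> (\<forall>t. F t = (1 / real N) * (\<Sum>i=1..N. F (nd N i) * Kr N t (nd N i)))"

lemma cos_jn: "cos ((real j - real n) * t) = cos (real (if n \<le> j then j - n else n - j) * t)"
proof (cases "n \<le> j")
  case True then show ?thesis by (simp add: of_nat_diff)
next
  case False
  have "cos ((real j - real n) * t) = cos ((real n - real j) * t)"
    by (metis cos_minus minus_diff_eq mult_minus_left)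
  then show ?thesis using False by (simp add: of_nat_diff)
qed

lemma Rep_cos:
  assumes N: "N \<ge> 1" and m: "\<bar>real j - real n\<bar> < real N"
  shows "Rep N (\<lambda>t. cos ((real j - real n) * t))"
proof -
  define k where "k = (if n \<le> j then j - n else n - j)"
  have k: "k < N" using m unfolding k_def by (auto simp: of_nat_diff)
  show ?thesis unfolding Rep_def cos_jn k_def[symmetric]
    using reprod_cos[OF N k] by simp
qed

lemma Rep_zero: "Rep N (\<lambda>t. 0)" unfolding Rep_def by simp

lemma Rep_if: "(P \<Longrightarrow> Rep N F) \<Longrightarrow> Rep N (\<lambda>t. if P then F t else 0)"
  by (cases P) (simp_all add: Rep_zero)

lemma Rep_sum:
  assumes "\<And>j. j \<in> J \<Longrightarrow> Rep N (F j)"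
  shows "Rep N (\<lambda>t. \<Sum>j\<in>J. w j * F j t)"
  unfolding Rep_def
proof
  fix t
  have "(\<Sum>j\<in>J. w j * F j t) =
     (\<Sum>j\<in>J. w j * ((1 / real N) * (\<Sum>i=1..N. F j (nd N i) * Kr N t (nd N i))))"
    using assms unfolding Rep_def by (intro sum.cong) auto
  also have "\<dots> = (1 / real N) * (\<Sum>i=1..N. (\<Sum>j\<in>J. w j * F j (nd N i)) * Kr N t (nd N i))"
  proof -
    have "(\<Sum>j\<in>J. w j * ((1 / real N) * (\<Sum>i=1..N. F j (nd N i) * Kr N t (nd N i)))) =
       (1 / real N) * (\<Sum>j\<in>J. \<Sum>i=1..N. w j * F j (nd N i) * Kr N t (nd N i))"
      by (simp add: sum_distrib_left mult.assoc mult.left_commute)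
    also have "(\<Sum>j\<in>J. \<Sum>i=1..N. w j * F j (nd N i) * Kr N t (nd N i)) =
       (\<Sum>i=1..N. \<Sum>j\<in>J. w j * F j (nd N i) * Kr N t (nd N i))"
      by (rule sum.swap)
    also have "\<dots> = (\<Sum>i=1..N. (\<Sum>j\<in>J. w j * F j (nd N i)) * Kr N t (nd N i))"
      by (simp add: sum_distrib_right)
    finally show ?thesis .
  qed
  finally show "(\<Sum>j\<in>J. w j * F j t) =
     (1 / real N) * (\<Sum>i=1..N. (\<Sum>j\<in>J. w j * F j (nd N i)) * Kr N t (nd N i))" .
qed

lemma Rep_scale: assumes R: "Rep N F" shows "Rep N (\<lambda>t. c * F t)"
  unfolding Rep_def
proof
  fix t
  have e: "F t = (1 / real N) * (\<Sum>i=1..N. F (nd N i) * Kr N t (nd N i))"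
    using R unfolding Rep_def by blast
  show "c * F t = (1 / real N) * (\<Sum>i=1..N. (c * F (nd N i)) * Kr N t (nd N i))"
    unfolding e by (simp add: sum_distrib_left mult.assoc mult.left_commute)
qed
  
lemma Rep_suminf:
  assumes R: "\<And>n. Rep N (F n)" and S: "\<And>t. summable (\<lambda>n. F n t)"
  shows "Rep N (\<lambda>t. \<Sum>n. F n t)"
  unfolding Rep_def
proof
  fix t
  have "(\<Sum>n. F n t) = (\<Sum>n. (1 / real N) * (\<Sum>i=1..N. F n (nd N i) * Kr N t (nd N i)))"
    using R unfolding Rep_def by metis
  also have "\<dots> = (1 / real N) * (\<Sum>n. \<Sum>i=1..N. F n (nd N i) * Kr N t (nd N i))"
    by (rule suminf_mult) (intro summable_sum summable_mult2 S)
  also have "(\<Sum>n. \<Sum>i=1..N. F n (nd N i) * Kr N t (nd N i)) =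
      (\<Sum>i=1..N. \<Sum>n. F n (nd N i) * Kr N t (nd N i))"
    by (rule suminf_sum) (intro summable_mult2 S)
  also have "\<dots> = (\<Sum>i=1..N. (\<Sum>n. F n (nd N i)) * Kr N t (nd N i))"
    by (intro sum.cong refl suminf_mult2[symmetric] S)
  finally show "(\<Sum>n. F n t) = (1 / real N) * (\<Sum>i=1..N. (\<Sum>n. F n (nd N i)) * Kr N t (nd N i))" .
qed

lemma cos_pow:
  "((1 + cos t) / 2) ^ n = (\<Sum>j\<le>2*n. real (2*n choose j) / 4 ^ n * cos ((real j - real n) * t))"
proof -
  define z where "z = cis (t / 2)"
  have zc: "z + cnj z = complex_of_real (2 * cos (t / 2))"
    unfolding z_def cis_cnj by (simp add: complex_eq_iff)
  have "(z + cnj z) ^ (2*n) = (\<Sum>j\<le>2*n. of_nat (2*n choose j) * z ^ j * cnj z ^ (2*n - j))"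
    by (rule binomial_ring)
  also have "\<dots> = (\<Sum>j\<le>2*n. of_nat (2*n choose j) * cis ((real j - real n) * t))"
  proof (intro sum.cong refl)
    fix j assume "j \<in> {..2*n}"
    hence j: "j \<le> 2 * n" by simp
    have "z ^ j * cnj z ^ (2*n - j) = cis (real j * (t / 2)) * cis (real (2*n - j) * (- t / 2))"
      unfolding z_def cis_cnj DeMoivre by simp
    also have "\<dots> = cis ((real j - real n) * t)"
      unfolding cis_mult using j by (simp add: of_nat_diff algebra_simps)
    finally show "of_nat (2*n choose j) * z ^ j * cnj z ^ (2*n - j) =
        of_nat (2*n choose j) * cis ((real j - real n) * t)" by (simp add: mult.assoc)
  qed
  finally have E: "complex_of_real ((2 * cos (t / 2)) ^ (2*n)) =
      (\<Sum>j\<le>2*n. of_nat (2*n choose j) * cis ((real j - real n) * t))"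
    unfolding zc by simp
  have "(2 * cos (t / 2)) ^ (2*n) = (\<Sum>j\<le>2*n. real (2*n choose j) * cos ((real j - real n) * t))"
    using arg_cong[OF E, of Re] by (simp add: Re_sum)
  moreover have "(2 * cos (t / 2)) ^ (2*n) = 4 ^ n * ((1 + cos t) / 2) ^ n"
  proof -
    have "cos t = 2 * cos (t / 2) ^ 2 - 1" using cos_double_cos[of "t/2"] by simp
    hence sq: "(2 * cos (t / 2)) ^ 2 = 4 * ((1 + cos t) / 2)" by (simp add: power_mult_distrib)
    have "(2 * cos (t / 2)) ^ (2*n) = ((2 * cos (t / 2)) ^ 2) ^ n" by (simp only: power_mult)
    also have "\<dots> = 4 ^ n * ((1 + cos t) / 2) ^ n" unfolding sq by (rule power_mult_distrib)
    finally show ?thesis .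
  qed
  ultimately have E2: "4 ^ n * ((1 + cos t) / 2) ^ n =
      (\<Sum>j\<le>2*n. real (2*n choose j) * cos ((real j - real n) * t))" by simp
  have "((1 + cos t) / 2) ^ n = (4 ^ n * ((1 + cos t) / 2) ^ n) / 4 ^ n" by simp
  also have "\<dots> = (\<Sum>j\<le>2*n. real (2*n choose j) * cos ((real j - real n) * t)) / 4 ^ n"
    unfolding E2 ..
  also have "\<dots> = (\<Sum>j\<le>2*n. real (2*n choose j) / 4 ^ n * cos ((real j - real n) * t))"
    unfolding sum_divide_distrib by (intro sum.cong refl) simp
  finally show ?thesis .
qed



definition Xf :: "real \<Rightarrow> real \<Rightarrow> real" where "Xf c t = (1 + cos t) / (2 * (1 + c))"
definition Bc :: "real \<Rightarrow> nat \<Rightarrow> nat \<Rightarrow> real" where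
  "Bc c n j = real (2*n choose j) / (4 * (1 + c)) ^ n"
definition Lw :: "nat \<Rightarrow> real \<Rightarrow> nat \<Rightarrow> real \<Rightarrow> real" where
  "Lw N c n t = (\<Sum>j\<le>2*n. Bc c n j *
     (if \<bar>real j - real n\<bar> < real N then cos ((real j - real n) * t) else 0))"
definition Rw :: "nat \<Rightarrow> real \<Rightarrow> nat \<Rightarrow> real \<Rightarrow> real" where
  "Rw N c n t = (\<Sum>j\<le>2*n. Bc c n j *
     (if \<bar>real j - real n\<bar> < real N then 0 else cos ((real j - real n) * t)))"

lemma X_split: assumes c: "c > 0" shows "Xf c t ^ n = Lw N c n t + Rw N c n t"
proof -
  have "Xf c t ^ n = ((1 + cos t) / 2) ^ n / (1 + c) ^ n"
  proof -
    have xe: "Xf c t = ((1 + cos t) / 2) / (1 + c)" unfolding Xf_def by simp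
    show ?thesis unfolding xe by (rule power_divide)
  qed
  also have "\<dots> = (\<Sum>j\<le>2*n. real (2*n choose j) / 4 ^ n * cos ((real j - real n) * t)) / (1 + c) ^ n"
    by (simp add: cos_pow)
  also have "\<dots> = (\<Sum>j\<le>2*n. Bc c n j * cos ((real j - real n) * t))"
    unfolding sum_divide_distrib Bc_def power_mult_distrib using c by (intro sum.cong refl) (simp add: field_simps)
  also have "\<dots> = Lw N c n t + Rw N c n t"
    unfolding Lw_def Rw_def sum.distrib[symmetric] by (intro sum.cong refl) auto
  finally show ?thesis .
qed

lemma Rep_Lw: assumes N: "N \<ge> 1" shows "Rep N (Lw N c n)"
proof -
  have e: "Lw N c n = (\<lambda>t. \<Sum>j\<le>2*n. Bc c n j *
     (if \<bar>real j - real n\<bar> < real N then cos ((real j - real n) * t) else 0))"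
    by (rule ext) (simp add: Lw_def)
  show ?thesis unfolding e
    by (intro Rep_sum Rep_if Rep_cos[OF N])
qed

lemma zeta_gt1: "c > 0 \<Longrightarrow> zeta c > 1"
proof -
  assume "c > 0"
  then have "sqrt (c\<^sup>2 + 2 * c) \<ge> 0" by simp
  then show ?thesis using \<open>c > 0\<close> unfolding zeta_def by linarith
qed

lemma zeta_sq: assumes "c > 0" shows "(zeta c + 1) ^ 2 = (2 * c + 4) * zeta c"
proof -
  define q where "q = sqrt (c\<^sup>2 + 2 * c)"
  have q2: "q ^ 2 = c\<^sup>2 + 2 * c" unfolding q_def using assms by simp
  have "(zeta c + 1) ^ 2 = (c + 2 + q) ^ 2" unfolding zeta_def q_def by (simp add: algebra_simps)
  also have "\<dots> = (c + 2)^2 + 2 * (c + 2) * q + q ^ 2" by (simp add: power2_eq_square algebra_simps)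
  also have "\<dots> = (2 * c + 4) * (c + 1 + q)" unfolding q2 by (simp add: power2_eq_square algebra_simps)
  finally show ?thesis unfolding zeta_def q_def by simp
qed

lemma Rw_bound:
  assumes c: "c > 0"
  shows "\<bar>Rw N c n t\<bar> \<le> 2 * ((c + 2) / (2 * (c + 1))) ^ n / zeta c ^ N"
proof -
  define z where "z = zeta c"
  have z1: "z > 1" unfolding z_def using zeta_gt1[OF c] .
  have z0: "z > 0" using z1 by simp
  have Bc0: "Bc c n j \<ge> 0" for j unfolding Bc_def using c by simp
  define K where "K = 1 / ((4 * (1 + c)) ^ n * z ^ N)"
  have "\<bar>Rw N c n t\<bar> \<le> (\<Sum>j\<le>2*n. \<bar>Bc c n j *
     (if \<bar>real j - real n\<bar> < real N then 0 else cos ((real j - real n) * t))\<bar>)"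
    unfolding Rw_def by (rule sum_abs)
  also have "\<dots> \<le> (\<Sum>j\<le>2*n. Bc c n j * ((z ^ j / z ^ n + z ^ n / z ^ j) / z ^ N))"
  proof (intro sum_mono)
    fix j
    have A: "\<bar>(if \<bar>real j - real n\<bar> < real N then 0 else cos ((real j - real n) * t))\<bar>
             \<le> (z ^ j / z ^ n + z ^ n / z ^ j) / z ^ N"
    proof (cases "\<bar>real j - real n\<bar> < real N")
      case True then show ?thesis using z0 by simp
    next
      case False
      have pos: "z ^ j / z ^ n \<ge> 0" "z ^ n / z ^ j \<ge> 0" using z0 by simp_all
      have "z ^ N \<le> z ^ j / z ^ n + z ^ n / z ^ j"
      proof (cases "n \<le> j")
        case True
        hence "N \<le> j - n" using False by (simp add: of_nat_diff)
        hence "z ^ N \<le> z ^ (j - n)" using z1 by (intro power_increasing) auto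
        also have "z ^ (j - n) = z ^ j / z ^ n" using True z0 by (simp add: power_diff)
        finally show ?thesis using pos by linarith
      next
        case nj: False
        hence "N \<le> n - j" using False by (simp add: of_nat_diff)
        hence "z ^ N \<le> z ^ (n - j)" using z1 by (intro power_increasing) auto
        also have "z ^ (n - j) = z ^ n / z ^ j" using nj z0 by (simp add: power_diff)
        finally show ?thesis using pos by linarith
      qed
      then have h1: "1 \<le> (z ^ j / z ^ n + z ^ n / z ^ j) / z ^ N" using z0 by (simp add: le_divide_eq)
      show ?thesis using False order_trans[OF abs_cos_le_one h1] by simp
    qed
    show "\<bar>Bc c n j * (if \<bar>real j - real n\<bar> < real N then 0 else cos ((real j - real n) * t))\<bar>
          \<le> Bc c n j * ((z ^ j / z ^ n + z ^ n / z ^ j) / z ^ N)"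
      unfolding abs_mult abs_of_nonneg[OF Bc0] by (rule mult_left_mono[OF A Bc0])
  qed
  also have "\<dots> = K * ((\<Sum>j\<le>2*n. real (2*n choose j) * z ^ j) / z ^ n
                     + z ^ n * (\<Sum>j\<le>2*n. real (2*n choose j) * (1 / z) ^ j))"
  proof -
    have "Bc c n j * ((z ^ j / z ^ n + z ^ n / z ^ j) / z ^ N) =
          K * (real (2*n choose j) * z ^ j / z ^ n + z ^ n * (real (2*n choose j) * (1 / z) ^ j))" for j
      unfolding Bc_def K_def using z0 c by (simp add: field_simps power_one_over)
    then have "(\<Sum>j\<le>2*n. Bc c n j * ((z ^ j / z ^ n + z ^ n / z ^ j) / z ^ N)) =
       (\<Sum>j\<le>2*n. K * (real (2*n choose j) * z ^ j / z ^ n + z ^ n * (real (2*n choose j) * (1 / z) ^ j)))"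
      by (intro sum.cong refl) simp
    also have "\<dots> = K * ((\<Sum>j\<le>2*n. real (2*n choose j) * z ^ j) / z ^ n
                     + z ^ n * (\<Sum>j\<le>2*n. real (2*n choose j) * (1 / z) ^ j))"
      by (simp only: sum_distrib_left[symmetric] sum.distrib sum_divide_distrib[symmetric])
    finally show ?thesis .
  qed
  also have "(\<Sum>j\<le>2*n. real (2*n choose j) * z ^ j) = (z + 1) ^ (2*n)"
    using binomial_ring[of z 1 "2*n"] by simp
  also have "(\<Sum>j\<le>2*n. real (2*n choose j) * (1 / z) ^ j) = (1 / z + 1) ^ (2*n)"
    using binomial_ring[of "1/z" 1 "2*n"] by simp
  also have "(1 / z + 1) ^ (2*n) = (z + 1) ^ (2*n) / z ^ (2*n)"
    using z0 by (simp add: power_divide field_simps)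
  also have "(z + 1) ^ (2*n) = (2 * c + 4) ^ n * z ^ n"
    by (simp add: power_mult zeta_sq[OF c, folded z_def] power_mult_distrib)
  also have "K * ((2 * c + 4) ^ n * z ^ n / z ^ n + z ^ n * ((2 * c + 4) ^ n * z ^ n / z ^ (2 * n)))
     = 2 * ((c + 2) / (2 * (c + 1))) ^ n / z ^ N"
  proof -
    have "z ^ (2 * n) = z ^ n * z ^ n" by (simp add: mult_2 power_add)
    hence "K * ((2 * c + 4) ^ n * z ^ n / z ^ n + z ^ n * ((2 * c + 4) ^ n * z ^ n / z ^ (2 * n)))
        = 2 * ((2 * c + 4) ^ n / (4 * (1 + c)) ^ n) / z ^ N"
      unfolding K_def using z0 c by (simp add: field_simps)
    also have "(2 * c + 4) ^ n / (4 * (1 + c)) ^ n = ((c + 2) / (2 * (c + 1))) ^ n"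
    proof -
      have "(2 * c + 4) / (4 * (1 + c)) = (c + 2) / (2 * (c + 1))" using c by (simp add: field_simps)
      then show ?thesis by (metis power_divide)
    qed
    finally show ?thesis .
  qed
  finally show ?thesis unfolding z_def .
qed



lemma summ_pow:
  assumes q: "0 < q" "q < 1"
  shows "summable (\<lambda>n. real (Suc n) powr a * q ^ Suc n)"
proof -
  define lam where "lam = (1 + q) / (2 * q)"
  have lam1: "lam > 1" unfolding lam_def using q by (simp add: field_simps)
  have lnp: "ln lam > 0" using lam1 by simp
  obtain M :: nat where M: "\<bar>a\<bar> / ln lam < real M" using reals_Archimedean2 by blast
  show ?thesis
  proof (rule summable_ratio_test[where c = "(1 + q) / 2" and N = M])
    show "(1 + q) / 2 < 1" using q by simp
    fix n assume n: "M \<le> n"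
    define x where "x = 1 / real (Suc n)"
    have x0: "x > 0" unfolding x_def by simp
    have base: "real (Suc (Suc n)) = (1 + x) * real (Suc n)" unfolding x_def by (simp add: field_simps)
    have r: "real (Suc (Suc n)) powr a = (1 + x) powr a * real (Suc n) powr a"
      unfolding base using x0 by (simp add: powr_mult)
    have "(1 + x) powr a = exp (a * ln (1 + x))" using x0 by (simp add: powr_def)
    also have "a * ln (1 + x) \<le> \<bar>a\<bar> * x"
    proof -
      have l0: "0 \<le> ln (1 + x)" using x0 by simp
      have "a * ln (1 + x) \<le> \<bar>a\<bar> * ln (1 + x)" using l0 by (intro mult_right_mono) auto
      also have "\<dots> \<le> \<bar>a\<bar> * x" using x0 by (intro mult_left_mono ln_add_one_self_le_self) auto
      finally show ?thesis .
    qed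
    hence "exp (a * ln (1 + x)) \<le> exp (\<bar>a\<bar> * x)" by simp
    also have "\<bar>a\<bar> * x \<le> ln lam"
    proof -
      have "\<bar>a\<bar> < ln lam * real M" using M lnp by (simp add: divide_less_eq mult.commute)
      also have "\<dots> \<le> ln lam * real (Suc n)" using n lnp by (intro mult_left_mono) auto
      finally show ?thesis unfolding x_def by (simp add: field_simps)
    qed
    hence "exp (\<bar>a\<bar> * x) \<le> lam" using lam1 by (metis exp_le_cancel_iff exp_ln less_trans zero_less_one)
    finally have rl: "(1 + x) powr a \<le> lam" .
    have "norm (real (Suc (Suc n)) powr a * q ^ Suc (Suc n)) =
          (1 + x) powr a * q * (real (Suc n) powr a * q ^ Suc n)"
      unfolding r using q by (simp add: abs_mult)
    also have "\<dots> \<le> lam * q * (real (Suc n) powr a * q ^ Suc n)"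
      using rl q by (intro mult_right_mono) auto
    also have "lam * q = (1 + q) / 2" unfolding lam_def using q by simp
    finally show "norm (real (Suc (Suc n)) powr a * q ^ Suc (Suc n)) \<le>
         (1 + q) / 2 * norm (real (Suc n) powr a * q ^ Suc n)" using q by simp
  qed
qed



lemma final_ineq:
  fixes L eps T Q :: real
  assumes "L \<ge> 1" "eps \<ge> 0" "T \<ge> 0" "Q \<ge> 0"
  shows "(eps + Q * T) * (16 * L) + Q * T \<le> (16 * (1 + Q) + Q) * L * (eps + T)"
proof -
  have a: "Q * T \<le> Q * T * L" using mult_left_mono[of 1 L "Q*T"] assms by simp
  have b: "0 \<le> 16 * Q * L * eps" "0 \<le> 16 * L * T" "0 \<le> Q * L * eps" using assms by simp_all
  have "(16 * (1 + Q) + Q) * L * (eps + T) = 16 * L * eps + 16 * L * T + 16 * Q * L * eps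
        + 16 * Q * L * T + Q * L * eps + Q * L * T" by (simp add: algebra_simps)
  moreover have "(eps + Q * T) * (16 * L) + Q * T = 16 * L * eps + 16 * Q * L * T + Q * T"
    by (simp add: algebra_simps)
  ultimately show ?thesis using a b by (simp add: algebra_simps)
qed

theorem mainTheorem6:
  fixes a C c :: real
  assumes "a > -1" and "C > 0" and "c > 0"
  shows "\<exists>D::real. \<forall>(gc::nat \<Rightarrow> real) (P::nat) (\<epsilon>::real).
           (\<forall>n\<ge>1. \<bar>gc n\<bar> \<le> C * real n powr a) \<and> P \<ge> 1 \<and> \<epsilon> > 0 \<and>
           (\<forall>i\<in>{1..P}. \<bar>g_series gc (cheb_node c P i)\<bar> < \<epsilon>)
           \<longrightarrow> (\<forall>x\<in>{0..1 / (1 + c)}.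
                 \<bar>g_series gc x\<bar> \<le> D * (ln (real P + 1) + 1) *
                    (\<epsilon> + zeta c powr (- real P) / (zeta c - 1)))"
proof -
  have c: "c > 0" and C: "C > 0" using assms by auto
  define r where "r = (c + 2) / (2 * (c + 1))"
  have r0: "0 < r" and r1: "r < 1" unfolding r_def using c by (simp_all add: field_simps)
  define Mf where "Mf n = C * (real (Suc n) powr a * r ^ Suc n)" for n
  have Mf_sum: "summable Mf" unfolding Mf_def by (intro summable_mult summ_pow r0 r1)
  have Mf0: "Mf n \<ge> 0" for n unfolding Mf_def using C r0 by simp
  define S where "S = suminf Mf"
  have S0: "S \<ge> 0" unfolding S_def using Mf_sum Mf0 by (simp add: suminf_nonneg)
  define z where "z = zeta c"
  have z1: "z > 1" unfolding z_def using zeta_gt1[OF c] .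
  define Q where "Q = 2 * S * (z - 1)"
  have Q0: "Q \<ge> 0" unfolding Q_def using S0 z1 by simp
  show ?thesis
  proof (rule exI[of _ "16 * (1 + Q) + Q"], intro allI impI ballI)
    fix gc :: "nat \<Rightarrow> real" and P :: nat and eps :: real and x :: real
    assume H: "(\<forall>n\<ge>1. \<bar>gc n\<bar> \<le> C * real n powr a) \<and> P \<ge> 1 \<and> eps > 0 \<and>
           (\<forall>i\<in>{1..P}. \<bar>g_series gc (cheb_node c P i)\<bar> < eps)"
    assume x: "x \<in> {0..1 / (1 + c)}"
    have gcb: "\<bar>gc (Suc n)\<bar> \<le> C * real (Suc n) powr a" for n
      using H[THEN conjunct1, rule_format, of "Suc n"] by simp
    have P1: "P \<ge> 1" and eps: "eps > 0" using H by auto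
    have nodes: "\<bar>g_series gc (cheb_node c P i)\<bar> < eps" if "i \<in> {1..P}" for i using H that by auto
    define E where "E = 2 * S / z ^ P"
    define RR where "RR t = (\<Sum>n. gc (Suc n) * Rw P c (Suc n) t)" for t
    define HL where "HL = (\<lambda>t. \<Sum>n. gc (Suc n) * Lw P c (Suc n) t)"
    have sX: "summable (\<lambda>n. gc (Suc n) * Xf c t ^ Suc n)" for t
    proof (rule summable_comparison_test[OF _ Mf_sum], intro exI allI impI)
      fix n
      have "0 \<le> 1 + cos t" using cos_ge_minus_one[of t] by linarith
      then have X0: "0 \<le> Xf c t" unfolding Xf_def using c by (intro divide_nonneg_pos) auto
      have "Xf c t \<le> 2 / (2 * (1 + c))" unfolding Xf_def using c cos_le_one[of t]
        by (intro divide_right_mono) auto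
      also have "\<dots> = 1 / (1 + c)" using c by (simp add: field_simps)
      also have "1 / (1 + c) \<le> r" unfolding r_def using c by (simp add: field_simps)
      finally have "Xf c t ^ Suc n \<le> r ^ Suc n" using X0 by (intro power_mono) auto
      then have "\<bar>gc (Suc n)\<bar> * Xf c t ^ Suc n \<le> (C * real (Suc n) powr a) * r ^ Suc n"
        using gcb[of n] X0 C by (intro mult_mono) auto
      moreover have "\<bar>Xf c t ^ Suc n\<bar> = Xf c t ^ Suc n" using X0 by simp
      ultimately show "norm (gc (Suc n) * Xf c t ^ Suc n) \<le> Mf n"
        unfolding Mf_def norm_mult real_norm_def by (simp add: mult.assoc abs_mult)
    qed
    have Rb: "\<bar>gc (Suc n) * Rw P c (Suc n) t\<bar> \<le> Mf n * (2 / z ^ P)" for n t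
    proof -
      have "\<bar>Rw P c (Suc n) t\<bar> \<le> 2 * r ^ Suc n / z ^ P"
        using Rw_bound[OF c, of P "Suc n" t] unfolding r_def z_def by simp
      then have "\<bar>gc (Suc n)\<bar> * \<bar>Rw P c (Suc n) t\<bar> \<le> C * real (Suc n) powr a * (2 * r ^ Suc n / z ^ P)"
        using gcb[of n] by (intro mult_mono) auto
      then show ?thesis unfolding Mf_def by (simp add: abs_mult algebra_simps)
    qed
    have sR: "summable (\<lambda>n. gc (Suc n) * Rw P c (Suc n) t)" for t
    proof (rule summable_comparison_test[OF _ summable_mult2[OF Mf_sum, of "2 / z ^ P"]])
      show "\<exists>N. \<forall>n\<ge>N. norm (gc (Suc n) * Rw P c (Suc n) t) \<le> Mf n * (2 / z ^ P)"
        unfolding real_norm_def using Rb by blast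
    qed
    have sL: "summable (\<lambda>n. gc (Suc n) * Lw P c (Suc n) t)" for t
    proof -
      have "(\<lambda>n. gc (Suc n) * Lw P c (Suc n) t) =
            (\<lambda>n. gc (Suc n) * Xf c t ^ Suc n - gc (Suc n) * Rw P c (Suc n) t)"
      proof
        fix n
        show "gc (Suc n) * Lw P c (Suc n) t = gc (Suc n) * Xf c t ^ Suc n - gc (Suc n) * Rw P c (Suc n) t"
          unfolding X_split[OF c, of t "Suc n" P] by (simp add: algebra_simps)
      qed
      then show ?thesis using summable_diff[OF sX sR] by simp
    qed
    have gsplit: "g_series gc (Xf c t) = HL t + RR t" for t
    proof -
      have "g_series gc (Xf c t) = (\<Sum>n. gc (Suc n) * Lw P c (Suc n) t + gc (Suc n) * Rw P c (Suc n) t)"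
        unfolding g_series_def X_split[OF c, of t _ P] by (simp add: distrib_left)
      also have "\<dots> = HL t + RR t" unfolding HL_def RR_def using suminf_add[OF sL sR] by simp
      finally show ?thesis .
    qed
    have RRb: "\<bar>RR t\<bar> \<le> E" for t
    proof -
      have sM: "summable (\<lambda>n. Mf n * (2 / z ^ P))" using summable_mult2[OF Mf_sum] .
      have eqs: "(\<Sum>n. Mf n * (2 / z ^ P)) = E" unfolding E_def S_def
        unfolding suminf_mult2[OF Mf_sum, symmetric] by simp
      have "RR t \<le> (\<Sum>n. Mf n * (2 / z ^ P))" unfolding RR_def
        by (rule suminf_le[OF _ sR sM]) (use Rb abs_le_D1 in blast)
      moreover have "- RR t \<le> (\<Sum>n. Mf n * (2 / z ^ P))"
      proof -
        have Rb': "- (gc (Suc n) * Rw P c (Suc n) t) \<le> Mf n * (2 / z ^ P)" for n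
          using Rb[of n t] by (simp only: abs_le_iff)
        have "(\<Sum>n. - (gc (Suc n) * Rw P c (Suc n) t)) \<le> (\<Sum>n. Mf n * (2 / z ^ P))"
          by (rule suminf_le[OF Rb' summable_minus[OF sR] sM])
        then show ?thesis unfolding RR_def suminf_minus[OF sR] .
      qed
      ultimately show ?thesis using eqs by linarith
    qed
    have RepHL: "Rep P HL" unfolding HL_def
      by (intro Rep_suminf Rep_scale Rep_Lw P1 sL)
    have HLnode: "\<bar>HL (nd P i)\<bar> \<le> eps + E" if "i \<in> {1..P}" for i
    proof -
      have "Xf c (nd P i) = cheb_node c P i" unfolding Xf_def cheb_node_def nd_def by simp
      then have "\<bar>HL (nd P i) + RR (nd P i)\<bar> < eps" using nodes[OF that] gsplit by metis
      then show ?thesis using RRb[of "nd P i"] by linarith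
    qed
    define t where "t = arccos (2 * (1 + c) * x - 1)"
    have xr: "-1 \<le> 2 * (1 + c) * x - 1" "2 * (1 + c) * x - 1 \<le> 1"
      using x c by (auto simp: field_simps)
    have t0: "0 \<le> t" "t \<le> pi" unfolding t_def using xr by (auto intro: arccos_lbound arccos_ubound)
    have Xt: "Xf c t = x" unfolding Xf_def t_def using xr c by (simp add: cos_arccos field_simps)
    define L where "L = ln (real P + 1) + 1"
    have "ln (real P) \<le> ln (real P + 1)" using P1 by simp
    then have HmL: "Hm P \<le> L" unfolding L_def using Hm_le_ln[OF P1] by linarith
    have L1: "L \<ge> 1" unfolding L_def by simp
    have "\<bar>HL t\<bar> = \<bar>(1 / real P) * (\<Sum>i=1..P. HL (nd P i) * Kr P t (nd P i))\<bar>"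
      using RepHL unfolding Rep_def by metis
    also have "\<dots> \<le> (1 / real P) * (\<Sum>i=1..P. (eps + E) * \<bar>Kr P t (nd P i)\<bar>)"
    proof -
      have "\<bar>\<Sum>i=1..P. HL (nd P i) * Kr P t (nd P i)\<bar> \<le> (\<Sum>i=1..P. \<bar>HL (nd P i) * Kr P t (nd P i)\<bar>)"
        by (rule sum_abs)
      also have "\<dots> \<le> (\<Sum>i=1..P. (eps + E) * \<bar>Kr P t (nd P i)\<bar>)"
        unfolding abs_mult by (intro sum_mono mult_right_mono HLnode) auto
      finally have X: "\<bar>\<Sum>i=1..P. HL (nd P i) * Kr P t (nd P i)\<bar> \<le> (\<Sum>i=1..P. (eps + E) * \<bar>Kr P t (nd P i)\<bar>)" .
      have "\<bar>(1 / real P) * (\<Sum>i=1..P. HL (nd P i) * Kr P t (nd P i))\<bar> =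
            (1 / real P) * \<bar>\<Sum>i=1..P. HL (nd P i) * Kr P t (nd P i)\<bar>" by (simp add: abs_mult)
      also have "\<dots> \<le> (1 / real P) * (\<Sum>i=1..P. (eps + E) * \<bar>Kr P t (nd P i)\<bar>)"
        by (rule mult_left_mono[OF X]) simp
      finally show ?thesis .
    qed
    also have "\<dots> = (eps + E) * ((1 / real P) * (\<Sum>i=1..P. \<bar>Kr P t (nd P i)\<bar>))"
      by (simp add: sum_distrib_left)
    also have "\<dots> \<le> (eps + E) * (16 * L)"
    proof -
      have "(1 / real P) * (\<Sum>i=1..P. \<bar>Kr P t (nd P i)\<bar>) \<le> (1 / real P) * (16 * real P * Hm P)"
        using Leb[OF P1 t0] by (intro mult_left_mono) auto
      also have "\<dots> = 16 * Hm P" using P1 by simp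
      also have "\<dots> \<le> 16 * L" using HmL by simp
      finally show ?thesis using eps RRb[of t] by (intro mult_left_mono) (auto intro: order_trans)
    qed
    finally have HLb: "\<bar>HL t\<bar> \<le> (eps + E) * (16 * L)" .
    have "g_series gc x = HL t + RR t" using gsplit[of t] unfolding Xt .
    then have "\<bar>g_series gc x\<bar> \<le> \<bar>HL t\<bar> + \<bar>RR t\<bar>" by (simp add: abs_triangle_ineq)
    then have gx: "\<bar>g_series gc x\<bar> \<le> (eps + E) * (16 * L) + E"
      using HLb RRb[of t] by linarith
    define T where "T = (1 / z ^ P) / (z - 1)"
    have T0: "T \<ge> 0" unfolding T_def using z1 by simp
    have ET: "E = Q * T" unfolding E_def Q_def T_def using z1 by (simp add: field_simps)
    have zp: "zeta c powr (- real P) / (zeta c - 1) = T"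
      unfolding T_def z_def[symmetric] using z1 by (simp add: powr_minus_divide powr_realpow)
    show "\<bar>g_series gc x\<bar> \<le> (16 * (1 + Q) + Q) * (ln (real P + 1) + 1) *
                    (eps + zeta c powr (- real P) / (zeta c - 1))"
    proof -
      have f: "(eps + Q * T) * (16 * L) + Q * T \<le> (16 * (1 + Q) + Q) * L * (eps + T)"
        using eps by (intro final_ineq[OF L1 _ T0 Q0]) simp
      show ?thesis unfolding zp L_def[symmetric] using order_trans[OF gx[unfolded ET] f] .
    qed
  qed
qed

end
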